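(* Let $n\ge4$ and for $1\le p\le n$ let $J_p$ be the set of regular elements of $\mathcal{ORCT}_n$ whose image has exactly $p$ elements. Then for all $1\le p\le n-2$, $\langle J_p\rangle\subseteq\langle J_{p+1}\rangle$, where $\langle A\rangle$ denotes the subsemigroup of $\mathcal{T}_n$ generated by $A$.
   Context: $\mathcal{T}_n$ is the full transformation semigroup on $[n]=\{1,\dots,n\}$ under composition. $\alpha$ is a contraction if $|x\alpha-y\alpha|\le|x-y|$ for all $x,y$; order-preserving if $x\le y\Rightarrow x\alpha\le y\alpha$; order-reversing if $x\le y\Rightarrow x\alpha\ge y\alpha$. $\mathcal{ORCT}_n$ is the semigroup of contractions that are order-preserving or order-reversing; $\alpha\in\mathcal{ORCT}_n$ is regular if $\alpha\beta\alpha=\alpha$ for some $\beta\in\mathcal{ORCT}_n$. *)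

theory Defs
  imports Main
begin

text \<open>Full transformation semigroup T_n: maps of {1..n} into itself, represented as
  functions nat => nat that are the identity outside {1..n} (so that equality of
  transformations is equality of functions). Maps are written on the right, so the
  product alpha beta (first alpha, then beta) is the function composition beta o alpha.\<close>

definition Tn :: "nat \<Rightarrow> (nat \<Rightarrow> nat) set" where
  "Tn n = {f. (\<forall>x\<in>{1..n}. f x \<in> {1..n}) \<and> (\<forall>x. x \<notin> {1..n} \<longrightarrow> f x = x)}"

definition tmult :: "(nat \<Rightarrow> nat) \<Rightarrow> (nat \<Rightarrow> nat) \<Rightarrow> (nat \<Rightarrow> nat)" where
  "tmult a b = b \<circ> a"

definition contraction :: "nat \<Rightarrow> (nat \<Rightarrow> nat) \<Rightarrow> bool" where
  "contraction n f \<longleftrightarrow> (\<forall>x\<in>{1..n}. \<forall>y\<in>{1..n}.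
      \<bar>int (f x) - int (f y)\<bar> \<le> \<bar>int x - int y\<bar>)"

definition order_preserving :: "nat \<Rightarrow> (nat \<Rightarrow> nat) \<Rightarrow> bool" where
  "order_preserving n f \<longleftrightarrow> (\<forall>x\<in>{1..n}. \<forall>y\<in>{1..n}. x \<le> y \<longrightarrow> f x \<le> f y)"

definition order_reversing :: "nat \<Rightarrow> (nat \<Rightarrow> nat) \<Rightarrow> bool" where
  "order_reversing n f \<longleftrightarrow> (\<forall>x\<in>{1..n}. \<forall>y\<in>{1..n}. x \<le> y \<longrightarrow> f x \<ge> f y)"

definition ORCT :: "nat \<Rightarrow> (nat \<Rightarrow> nat) set" where
  "ORCT n = {f \<in> Tn n. contraction n f \<and> (order_preserving n f \<or> order_reversing n f)}"

definition regular_ORCT :: "nat \<Rightarrow> (nat \<Rightarrow> nat) \<Rightarrow> bool" where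
  "regular_ORCT n a \<longleftrightarrow> a \<in> ORCT n \<and> (\<exists>b\<in>ORCT n. tmult (tmult a b) a = a)"

definition J :: "nat \<Rightarrow> nat \<Rightarrow> (nat \<Rightarrow> nat) set" where
  "J n p = {a. regular_ORCT n a \<and> card (a ` {1..n}) = p}"

inductive_set gen_semigroup :: "(nat \<Rightarrow> nat) set \<Rightarrow> (nat \<Rightarrow> nat) set" for A where
  base: "a \<in> A \<Longrightarrow> a \<in> gen_semigroup A"
| mult: "a \<in> gen_semigroup A \<Longrightarrow> b \<in> gen_semigroup A \<Longrightarrow> tmult a b \<in> gen_semigroup A"

end

theory Submission
  imports Defs
begin


definition clampi :: "int \<Rightarrow> int \<Rightarrow> int \<Rightarrow> int" where
  "clampi a b x = max a (min x b)"

definition gmap :: "nat \<Rightarrow> (int \<Rightarrow> int) \<Rightarrow> nat \<Rightarrow> nat" where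
  "gmap n g x = (if x \<in> {1..n} then nat (g (int x)) else x)"

definition Lf :: "int \<Rightarrow> bool \<Rightarrow> int \<Rightarrow> nat \<Rightarrow> int \<Rightarrow> int" where
  "Lf s e k q x = (if e then s + (clampi k (k + int q - 1) x - k)
                   else s - (clampi k (k + int q - 1) x - k))"

definition L :: "nat \<Rightarrow> int \<Rightarrow> bool \<Rightarrow> int \<Rightarrow> nat \<Rightarrow> nat \<Rightarrow> nat" where
  "L n s e k q = gmap n (Lf s e k q)"

definition valid :: "nat \<Rightarrow> int \<Rightarrow> bool \<Rightarrow> int \<Rightarrow> nat \<Rightarrow> bool" where
  "valid n s e k q \<longleftrightarrow> 1 \<le> q \<and> 1 \<le> k \<and> k + int q - 1 \<le> int n \<and>
     (if e then 1 \<le> s \<and> s + int q - 1 \<le> int n else 1 \<le> s - int q + 1 \<and> s \<le> int n)"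

lemma gmap_comp:
  assumes "\<And>x. x \<in> {1..n} \<Longrightarrow> 1 \<le> g1 (int x) \<and> g1 (int x) \<le> int n \<and> g2 (g1 (int x)) = g (int x)"
  shows "gmap n g2 \<circ> gmap n g1 = gmap n g"
proof
  fix x
  show "(gmap n g2 \<circ> gmap n g1) x = gmap n g x"
  proof (cases "x \<in> {1..n}")
    case True
    with assms[OF True] show ?thesis
      by (auto simp: gmap_def)
  next
    case False
    then have "gmap n g1 x = x" unfolding gmap_def by (rule if_not_P)
    moreover have "gmap n g2 x = x" "gmap n g x = x" using False unfolding gmap_def by (rule if_not_P)+
    ultimately show ?thesis by simp
  qed
qed

lemma Lf_range:
  assumes "valid n s e k q" "1 \<le> x" "x \<le> int n"
  shows "1 \<le> Lf s e k q x \<and> Lf s e k q x \<le> int n"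
  using assms by (auto simp: valid_def Lf_def clampi_def split: if_splits)

lemma gmap_Tn:
  assumes "\<And>x. x \<in> {1..n} \<Longrightarrow> 1 \<le> g (int x) \<and> g (int x) \<le> int n"
  shows "gmap n g \<in> Tn n"
  unfolding Tn_def gmap_def
proof (safe)
  fix x assume "x \<in> {1..n}"
  from assms[OF this] show "(if x \<in> {1..n} then nat (g (int x)) else x) \<in> {1..n}"
    using \<open>x \<in> {1..n}\<close> by auto
qed auto

lemma L_Tn: "valid n s e k q \<Longrightarrow> L n s e k q \<in> Tn n"
  unfolding L_def by (rule gmap_Tn) (use Lf_range in auto)

lemma L_contr: "valid n s e k q \<Longrightarrow> contraction n (L n s e k q)"
  unfolding contraction_def L_def gmap_def
proof (intro ballI)
  fix x y assume v: "valid n s e k q" and x: "x \<in> {1..n}" and y: "y \<in> {1..n}"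
  have "\<bar>Lf s e k q (int x) - Lf s e k q (int y)\<bar> \<le> \<bar>int x - int y\<bar>"
    by (auto simp: Lf_def clampi_def)
  moreover have "Lf s e k q (int x) \<ge> 1" "Lf s e k q (int y) \<ge> 1"
    using Lf_range[OF v, of "int x"] Lf_range[OF v, of "int y"] x y by auto
  ultimately show "\<bar>int (if x \<in> {1..n} then nat (Lf s e k q (int x)) else x) -
         int (if y \<in> {1..n} then nat (Lf s e k q (int y)) else y)\<bar> \<le> \<bar>int x - int y\<bar>"
    using x y by simp
qed

lemma L_mono: "valid n s e k q \<Longrightarrow> order_preserving n (L n s e k q) \<or> order_reversing n (L n s e k q)"
proof -
  assume v: "valid n s e k q"
  have r: "\<And>x. x \<in> {1..n} \<Longrightarrow> L n s e k q x = nat (Lf s e k q (int x))" by (simp add: L_def gmap_def)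
  show ?thesis
  proof (cases e)
    case True
    have "order_preserving n (L n s e k q)"
      unfolding order_preserving_def
    proof (intro ballI impI)
      fix x y assume xy: "x \<in> {1..n}" "y \<in> {1..n}" "x \<le> y"
      have "Lf s e k q (int x) \<le> Lf s e k q (int y)" using True xy
        by (simp add: Lf_def clampi_def)
      then show "L n s e k q x \<le> L n s e k q y" 
        using r[OF xy(1)] r[OF xy(2)] nat_mono by metis
    qed
    then show ?thesis ..
  next
    case False
    have "order_reversing n (L n s e k q)"
      unfolding order_reversing_def
    proof (intro ballI impI)
      fix x y assume xy: "x \<in> {1..n}" "y \<in> {1..n}" "x \<le> y"
      have "Lf s e k q (int x) \<ge> Lf s e k q (int y)" using False xy
        by (simp add: Lf_def clampi_def)
      then show "L n s e k q x \<ge> L n s e k q y" 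
        using r[OF xy(1)] r[OF xy(2)] nat_mono by metis
    qed
    then show ?thesis ..
  qed
qed

lemma L_ORCT: "valid n s e k q \<Longrightarrow> L n s e k q \<in> ORCT n"
  using L_Tn L_contr L_mono unfolding ORCT_def by blast

lemma L_comp:
  assumes "valid n s1 e1 k1 q1"
    and "\<And>x. 1 \<le> x \<Longrightarrow> x \<le> int n \<Longrightarrow> Lf s2 e2 k2 q2 (Lf s1 e1 k1 q1 x) = Lf s e k q x"
  shows "L n s2 e2 k2 q2 \<circ> L n s1 e1 k1 q1 = L n s e k q"
  unfolding L_def by (rule gmap_comp) (use assms Lf_range in auto)

lemma L_reg: assumes v: "valid n s e k q"
  shows "regular_ORCT n (L n s e k q)"
proof -
  define b where "b = (if e then L n k True s q else L n (k + int q - 1) False (s - int q + 1) q)"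
  have vb: "valid n k True k q" using v by (auto simp: valid_def)
  have b1: "b \<in> ORCT n" unfolding b_def using v by (auto intro!: L_ORCT simp: valid_def)
  have "b \<circ> L n s e k q = L n k True k q"
  proof (cases e)
    case True
    then have "b = L n k True s q" by (simp add: b_def)
    then show ?thesis using v True
      by (simp only:) (rule L_comp, auto simp: Lf_def clampi_def valid_def)
  next
    case False
    then have "b = L n (k + int q - 1) False (s - int q + 1) q" by (simp add: b_def)
    then show ?thesis using v False
      by (simp only:) (rule L_comp, auto simp: Lf_def clampi_def valid_def)
  qed
  moreover have "L n s e k q \<circ> L n k True k q = L n s e k q"
    using v vb by (intro L_comp) (auto simp: Lf_def clampi_def valid_def)
  ultimately have "tmult (tmult (L n s e k q) b) (L n s e k q) = L n s e k q"
    by (simp add: tmult_def comp_assoc)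
  then show ?thesis unfolding regular_ORCT_def using L_ORCT[OF v] b1 by blast
qed

lemma L_image: assumes v: "valid n s e k q"
  shows "L n s e k q ` {1..n} = {nat (if e then s else s - int q + 1) .. nat ((if e then s else s - int q + 1) + int q - 1)}"
proof
  show "L n s e k q ` {1..n} \<subseteq> {nat (if e then s else s - int q + 1) .. nat ((if e then s else s - int q + 1) + int q - 1)}"
  proof
    fix y assume "y \<in> L n s e k q ` {1..n}"
    then obtain x where x: "x \<in> {1..n}" "y = L n s e k q x" by blast
    then have "y = nat (Lf s e k q (int x))" by (simp add: L_def gmap_def)
    then show "y \<in> {nat (if e then s else s - int q + 1) .. nat ((if e then s else s - int q + 1) + int q - 1)}"
      using v x by (auto simp: Lf_def clampi_def valid_def intro!: nat_mono)
  qed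
next
  show "{nat (if e then s else s - int q + 1) .. nat ((if e then s else s - int q + 1) + int q - 1)} \<subseteq> L n s e k q ` {1..n}"
  proof
    fix y assume y: "y \<in> {nat (if e then s else s - int q + 1) .. nat ((if e then s else s - int q + 1) + int q - 1)}"
    define x where "x = (if e then k + (int y - s) else k + (s - int y))"
    have x1: "1 \<le> x" "x \<le> int n" using v y by (auto simp: x_def valid_def)
    have "Lf s e k q x = int y" using v y by (auto simp: x_def valid_def Lf_def clampi_def)
    moreover have nx: "nat x \<in> {1..n}" using x1 by auto
    moreover have "L n s e k q (nat x) = nat (Lf s e k q (int (nat x)))" unfolding L_def gmap_def using nx by (rule if_P)
    ultimately have "L n s e k q (nat x) = y" using x1 by simp
    moreover note nx
    ultimately show "y \<in> L n s e k q ` {1..n}" by force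
  qed
qed

lemma L_card: assumes v: "valid n s e k q"
  shows "card (L n s e k q ` {1..n}) = q"
  unfolding L_image[OF v] using v by (auto simp: valid_def)

lemma L_J: "valid n s e k q \<Longrightarrow> L n s e k q \<in> J n q"
  unfolding J_def using L_reg L_card by blast

lemma gen_comp: "f \<in> gen_semigroup A \<Longrightarrow> g \<in> gen_semigroup A \<Longrightarrow> g \<circ> f \<in> gen_semigroup A"
  using gen_semigroup.mult[of f A g] by (simp add: tmult_def)

lemma interior:
  assumes v: "valid n s e k p" and k: "2 \<le> k" "k + int p \<le> int n" and p: "p + 2 \<le> n"
  shows "L n s e k p \<in> gen_semigroup (J n (p + 1))"
proof (cases "if e then 2 \<le> s else s + 1 \<le> int n")
  case True
  let ?f = "L n k True k (p + 1)"
  let ?g = "L n (if e then s - 1 else s + 1) e (k - 1) (p + 1)"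
  have vf: "valid n k True k (p + 1)" using v k by (auto simp: valid_def)
  have vg: "valid n (if e then s - 1 else s + 1) e (k - 1) (p + 1)" using v k True
    by (auto simp: valid_def split: if_splits)
  have "?g \<circ> ?f = L n s e k p" using vf v
    by (intro L_comp) (auto simp: Lf_def clampi_def valid_def)
  moreover have "?f \<in> gen_semigroup (J n (p + 1))" "?g \<in> gen_semigroup (J n (p + 1))"
    using L_J[OF vf] L_J[OF vg] by (auto intro: gen_semigroup.base)
  ultimately show ?thesis using gen_comp by metis
next
  case False
  let ?f = "L n (k - 1) True (k - 1) (p + 1)"
  let ?g = "L n s e k (p + 1)"
  have vf: "valid n (k - 1) True (k - 1) (p + 1)" using v k by (auto simp: valid_def)
  have vg: "valid n s e k (p + 1)" using v k False p
    by (auto simp: valid_def split: if_splits)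
  have "?g \<circ> ?f = L n s e k p" using vf v
    by (intro L_comp) (auto simp: Lf_def clampi_def valid_def)
  moreover have "?f \<in> gen_semigroup (J n (p + 1))" "?g \<in> gen_semigroup (J n (p + 1))"
    using L_J[OF vf] L_J[OF vg] by (auto intro: gen_semigroup.base)
  ultimately show ?thesis using gen_comp by metis
qed

lemma decomp:
  assumes v: "valid n s e k p" and p: "p + 2 \<le> n"
  shows "L n s e k p \<in> gen_semigroup (J n (p + 1))"
proof -
  consider "k = 1" | "k + int p - 1 = int n" | "2 \<le> k" "k + int p \<le> int n"
    using v by (force simp: valid_def)
  then show ?thesis
  proof cases
    case 1
    let ?t = "L n 2 True 1 (p + 1)"
    let ?a = "L n s e 2 p"
    have vt: "valid n 2 True 1 (p + 1)" using v p by (auto simp: valid_def)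
    have va: "valid n s e 2 p" using v p 1 by (auto simp: valid_def)
    have "?a \<circ> ?t = L n s e k p" using vt v 1
      by (intro L_comp) (auto simp: Lf_def clampi_def valid_def)
    moreover have "?t \<in> gen_semigroup (J n (p + 1))"
      using L_J[OF vt] by (auto intro: gen_semigroup.base)
    moreover have "?a \<in> gen_semigroup (J n (p + 1))"
      using interior[OF va] p by auto
    ultimately show ?thesis using gen_comp by metis
  next
    case 2
    let ?t = "L n (int n - int p - 1) True (int n - int p) (p + 1)"
    let ?a = "L n s e (k - 1) p"
    have vt: "valid n (int n - int p - 1) True (int n - int p) (p + 1)" using v p by (auto simp: valid_def)
    have va: "valid n s e (k - 1) p" using v p 2 by (auto simp: valid_def)
    have "?a \<circ> ?t = L n s e k p" using vt v 2
      by (intro L_comp) (auto simp: Lf_def clampi_def valid_def)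
    moreover have "?t \<in> gen_semigroup (J n (p + 1))"
      using L_J[OF vt] by (auto intro: gen_semigroup.base)
    moreover have "?a \<in> gen_semigroup (J n (p + 1))"
      using interior[OF va] p 2 by auto
    ultimately show ?thesis using gen_comp by metis
  next
    case 3
    then show ?thesis using interior[OF v] p by auto
  qed
qed


lemma step: assumes ac: "contraction n a" and "1 \<le> i" "i < n" shows "a (Suc i) \<le> a i + 1"
proof -
  have "Suc i \<in> {1..n}" "i \<in> {1..n}" using assms by auto
  then have "\<bar>int (a (Suc i)) - int (a i)\<bar> \<le> \<bar>int (Suc i) - int i\<bar>"
    using ac unfolding contraction_def by blast
  then show ?thesis by simp
qed

lemma ivt_nat:
  assumes "\<And>i. a0 \<le> i \<Longrightarrow> i < b0 \<Longrightarrow> f (Suc i) \<le> f i + (1::nat)"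
    and "a0 \<le> b0" "f a0 \<le> y" "y \<le> f b0"
  shows "\<exists>x\<in>{a0..b0}. f x = y"
  using assms
proof (induction b0)
  case 0
  then show ?case by auto
next
  case (Suc b)
  show ?case
  proof (cases "y = f (Suc b)")
    case True
    then show ?thesis using Suc.prems by auto
  next
    case False
    show ?thesis
    proof (cases "a0 = Suc b")
      case True
      then show ?thesis using Suc.prems by auto
    next
      case False2: False
      have "f (Suc b) \<le> f b + 1" using Suc.prems False2 by auto
      then have "y \<le> f b" using False Suc.prems by auto
      then obtain x where "x \<in> {a0..b}" "f x = y" using Suc.IH Suc.prems False2 by fastforce
      then show ?thesis by auto
    qed
  qed
qed

lemma Tn_in: "f \<in> Tn n \<Longrightarrow> x \<in> {1..n} \<Longrightarrow> f x \<in> {1..n}"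
  unfolding Tn_def by blast

lemma Tn_out: "f \<in> Tn n \<Longrightarrow> x \<notin> {1..n} \<Longrightarrow> f x = x"
  unfolding Tn_def by blast

lemma pres_form:
  assumes aT: "a \<in> Tn n" and ac: "contraction n a" and ap: "order_preserving n a"
    and bT: "b \<in> Tn n" and bc: "contraction n b"
    and reg: "\<And>x. x \<in> {1..n} \<Longrightarrow> a (b (a x)) = a x"
    and card: "card (a ` {1..n}) = p" and n: "1 \<le> n"
  shows "\<exists>s k. valid n s True k p \<and> a = L n s True k p"
proof -
  have mono: "a x \<le> a y" if "x \<in> {1..n}" "y \<in> {1..n}" "x \<le> y" for x y
    using ap that unfolding order_preserving_def by blast
  have a1: "a 1 \<in> {1..n}" "a n \<in> {1..n}" using Tn_in[OF aT] n by auto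
  have img: "a ` {1..n} = {a 1 .. a n}"
  proof
    show "a ` {1..n} \<subseteq> {a 1 .. a n}" using mono n by auto
    show "{a 1 .. a n} \<subseteq> a ` {1..n}"
    proof
      fix y assume "y \<in> {a 1 .. a n}"
      then obtain x where "x \<in> {1..n}" "a x = y"
        using ivt_nat[of 1 n a y] step[OF ac] n by auto
      then show "y \<in> a ` {1..n}" by blast
    qed
  qed
  have an: "a n = a 1 + p - 1" "1 \<le> p" using card a1 mono[of 1 n] n unfolding img by auto
  have inimg: "a (b y) = y \<and> b y \<in> {1..n}" if "y \<in> {a 1 .. a n}" for y
  proof -
    have "y \<in> a ` {1..n}" using that img by simp
    then obtain x where x0: "y = a x" "x \<in> {1..n}" by (rule imageE)
    then have x: "x \<in> {1..n}" "a x = y" by simp_all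
    have y1: "y \<in> {1..n}" using Tn_in[OF aT x(1)] x(2) by simp
    have "a (b y) = y" using reg[OF x(1)] unfolding x(2) .
    moreover have "b y \<in> {1..n}" using Tn_in[OF bT y1] .
    ultimately show ?thesis by blast
  qed
  define y0 where "y0 = a 1"
  define t where "t = b y0"
  have main: "i < p \<longrightarrow> t + i \<in> {1..n} \<and> b (y0 + i) = t + i \<and> a (t + i) = y0 + i" for i
  proof (induction i)
    case 0
    have "y0 \<in> {a 1 .. a n}" using an unfolding y0_def by auto
    then show ?case using inimg[of y0] unfolding t_def by auto
  next
    case (Suc i)
    show ?case
    proof
      assume ip: "Suc i < p"
      then have IH: "t + i \<in> {1..n}" "b (y0 + i) = t + i" "a (t + i) = y0 + i" using Suc.IH by auto
      have ys: "y0 + Suc i \<in> {a 1 .. a n}" using ip an unfolding y0_def by auto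
      have yi: "y0 + i \<in> {1 .. n}" using ip an a1 unfolding y0_def by auto
      have ys1: "y0 + Suc i \<in> {1 .. n}" using ys a1 by auto
      obtain A: "a (b (y0 + Suc i)) = y0 + Suc i" and B: "b (y0 + Suc i) \<in> {1..n}"
        using inimg[OF ys] by blast
      have "\<bar>int (b (y0 + Suc i)) - int (b (y0 + i))\<bar> \<le> \<bar>int (y0 + Suc i) - int (y0 + i)\<bar>"
        using bc ys1 yi unfolding contraction_def by blast
      then have C: "\<bar>int (b (y0 + Suc i)) - int (t + i)\<bar> \<le> 1" using IH by simp
      have D: "b (y0 + Suc i) \<noteq> t + i" using A IH by auto
      have E: "\<not> b (y0 + Suc i) < t + i"
      proof
        assume lt: "b (y0 + Suc i) < t + i"
        have "a (b (y0 + Suc i)) \<le> a (t + i)" by (rule mono[OF B IH(1)]) (use lt in simp)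
        then show False using A IH by auto
      qed
      have F: "b (y0 + Suc i) = t + Suc i" using C D E by auto
      show "t + Suc i \<in> {1..n} \<and> b (y0 + Suc i) = t + Suc i \<and> a (t + Suc i) = y0 + Suc i"
        using F A B by auto
    qed
  qed
  have t1: "t + (p - 1) \<in> {1..n}" "t \<in> {1..n}" using main[of "p - 1"] main[of 0] an by auto
  have val: "valid n (int y0) True (int t) p"
    using t1 an a1 unfolding valid_def y0_def by auto
  have "a = L n (int y0) True (int t) p"
  proof
    fix x
    show "a x = L n (int y0) True (int t) p x"
    proof (cases "x \<in> {1..n}")
      case False
      then show ?thesis using Tn_out[OF aT] unfolding L_def gmap_def by auto
    next
      case True
      have R: "L n (int y0) True (int t) p x = nat (int y0 + (clampi (int t) (int t + int p - 1) (int x) - int t))"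
        using True unfolding L_def gmap_def Lf_def by simp
      consider "x < t" | "t \<le> x" "x \<le> t + (p - 1)" | "t + (p - 1) < x" by linarith
      then show ?thesis
      proof cases
        case 1
        have "a x \<le> a t" "a 1 \<le> a x" using mono[of x t] mono[of 1 x] True t1 1 by auto
        moreover have "a t = y0" using main[of 0] an by auto
        ultimately have "a x = y0" unfolding y0_def by auto
        then show ?thesis using R 1 by (simp add: clampi_def)
      next
        case 2
        define i where "i = x - t"
        have i: "x = t + i" "i < p" using 2 an(2) unfolding i_def by linarith+
        then have "a x = y0 + i" using main[of i] by auto
        then show ?thesis using R i by (simp add: clampi_def)
      next
        case 3
        have "a (t + (p - 1)) \<le> a x" "a x \<le> a n" using mono[of "t + (p - 1)" x] mono[of x n] True t1 3 by auto
        moreover have "a (t + (p - 1)) = y0 + (p - 1)" using main[of "p - 1"] an by auto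
        ultimately have "a x = y0 + (p - 1)" using an unfolding y0_def by auto
        then show ?thesis using R 3 an by (simp add: clampi_def)
      qed
    qed
  qed
  then show ?thesis using val by blast
qed



definition Rf :: "nat \<Rightarrow> nat \<Rightarrow> nat" where "Rf n = L n (int n) False 1 n"

lemma R_valid: "1 \<le> n \<Longrightarrow> valid n (int n) False 1 n"
  by (simp add: valid_def)

lemma R_in: "x \<in> {1..n} \<Longrightarrow> Rf n x = n + 1 - x"
proof -
  assume x: "x \<in> {1..n}"
  then have "Rf n x = nat (Lf (int n) False 1 n (int x))" by (simp add: Rf_def L_def gmap_def)
  also have "\<dots> = n + 1 - x" using x by (auto simp: Lf_def clampi_def)
  finally show ?thesis .
qed

lemma R_out: "x \<notin> {1..n} \<Longrightarrow> Rf n x = x"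
  unfolding Rf_def L_def gmap_def by (rule if_not_P)

lemma R_range: "x \<in> {1..n} \<Longrightarrow> Rf n x \<in> {1..n}"
  using R_in by auto

lemma RR: "Rf n (Rf n x) = x"
proof (cases "x \<in> {1..n}")
  case True
  then show ?thesis using R_in R_range by (metis R_in One_nat_def atLeastAtMost_iff diff_diff_cancel add_diff_cancel_right' Suc_diff_le le_SucI Suc_eq_plus1)
next
  case False
  then show ?thesis using R_out by simp
qed

lemma R_img: "Rf n ` {1..n} = {1..n}"
proof
  show "Rf n ` {1..n} \<subseteq> {1..n}" using R_range by blast
  show "{1..n} \<subseteq> Rf n ` {1..n}"
  proof
    fix x assume x: "x \<in> {1..n}"
    then have "x = Rf n (Rf n x)" by (simp add: RR)
    then show "x \<in> Rf n ` {1..n}" using R_range[OF x] by blast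
  qed
qed

lemma rev_form:
  assumes aT: "a \<in> Tn n" and ac: "contraction n a" and ar: "order_reversing n a"
    and bT: "b \<in> Tn n" and bc: "contraction n b"
    and reg: "\<And>x. x \<in> {1..n} \<Longrightarrow> a (b (a x)) = a x"
    and card: "card (a ` {1..n}) = p" and n: "1 \<le> n"
  shows "\<exists>s k. valid n s False k p \<and> a = L n s False k p"
proof -
  define a' where "a' = a \<circ> Rf n"
  define b' where "b' = Rf n \<circ> b"
  have RT: "Rf n \<in> Tn n" unfolding Rf_def using L_Tn R_valid n by blast
  have a'T: "a' \<in> Tn n" unfolding Tn_def a'_def
    using Tn_in[OF aT] Tn_out[OF aT] R_range R_out by auto
  have b'T: "b' \<in> Tn n" unfolding Tn_def b'_def
    using Tn_in[OF bT] Tn_out[OF bT] R_range R_out by auto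
  have a'c: "contraction n a'" unfolding contraction_def
  proof (intro ballI)
    fix x y assume x: "x \<in> {1..n}" and y: "y \<in> {1..n}"
    have "\<bar>int (a (Rf n x)) - int (a (Rf n y))\<bar> \<le> \<bar>int (Rf n x) - int (Rf n y)\<bar>"
      using ac R_range[OF x] R_range[OF y] unfolding contraction_def by blast
    also have "\<dots> = \<bar>int x - int y\<bar>" using R_in[OF x] R_in[OF y] x y by auto
    finally show "\<bar>int (a' x) - int (a' y)\<bar> \<le> \<bar>int x - int y\<bar>" by (simp add: a'_def)
  qed
  have b'c: "contraction n b'" unfolding contraction_def
  proof (intro ballI)
    fix x y assume x: "x \<in> {1..n}" and y: "y \<in> {1..n}"
    have bx: "b x \<in> {1..n}" "b y \<in> {1..n}" using Tn_in[OF bT] x y by auto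
    have "\<bar>int (Rf n (b x)) - int (Rf n (b y))\<bar> = \<bar>int (b x) - int (b y)\<bar>"
      using R_in[OF bx(1)] R_in[OF bx(2)] bx by auto
    also have "\<dots> \<le> \<bar>int x - int y\<bar>" using bc x y unfolding contraction_def by blast
    finally show "\<bar>int (b' x) - int (b' y)\<bar> \<le> \<bar>int x - int y\<bar>" by (simp add: b'_def)
  qed
  have a'p: "order_preserving n a'" unfolding order_preserving_def
  proof (intro ballI impI)
    fix x y assume x: "x \<in> {1..n}" and y: "y \<in> {1..n}" and xy: "x \<le> y"
    have "Rf n y \<le> Rf n x" using R_in[OF x] R_in[OF y] xy by auto
    then have "a (Rf n x) \<le> a (Rf n y)" using ar R_range[OF x] R_range[OF y] unfolding order_reversing_def by blast
    then show "a' x \<le> a' y" by (simp add: a'_def)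
  qed
  have reg': "a' (b' (a' x)) = a' x" if x: "x \<in> {1..n}" for x
    using reg[OF R_range[OF x]] by (simp add: a'_def b'_def RR)
  have "a' ` {1..n} = a ` (Rf n ` {1..n})" unfolding a'_def by (rule image_comp[symmetric])
  then have card': "card (a' ` {1..n}) = p" using card by (simp only: R_img)
  obtain s k where v: "valid n s True k p" and e: "a' = L n s True k p"
    using pres_form[OF a'T a'c a'p b'T b'c reg' card' n] by blast
  have "a = a' \<circ> Rf n" by (auto simp: a'_def RR)
  also have "\<dots> = L n s True k p \<circ> L n (int n) False 1 n" by (simp add: e Rf_def)
  also have "\<dots> = L n (s + int p - 1) False (int n + 2 - k - int p) p"
    using R_valid[OF n] v by (intro L_comp) (auto simp: Lf_def clampi_def valid_def)
  finally have "a = L n (s + int p - 1) False (int n + 2 - k - int p) p" .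
  moreover have "valid n (s + int p - 1) False (int n + 2 - k - int p) p" using v by (auto simp: valid_def)
  ultimately show ?thesis by blast
qed

lemma J_form:
  assumes "a \<in> J n p" "1 \<le> n"
  shows "\<exists>s e k. valid n s e k p \<and> a = L n s e k p"
proof -
  from assms obtain b where aO: "a \<in> ORCT n" and bO: "b \<in> ORCT n" and r: "tmult (tmult a b) a = a"
    and c: "card (a ` {1..n}) = p"
    unfolding J_def regular_ORCT_def by blast
  have reg: "a (b (a x)) = a x" for x using fun_cong[OF r, of x] by (simp add: tmult_def)
  from aO bO have aT: "a \<in> Tn n" "contraction n a" "order_preserving n a \<or> order_reversing n a"
    and bT: "b \<in> Tn n" "contraction n b" unfolding ORCT_def by auto
  from aT(3) show ?thesis
  proof
    assume "order_preserving n a"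
    then show ?thesis using pres_form[OF aT(1,2) _ bT reg c assms(2)] by blast
  next
    assume "order_reversing n a"
    then show ?thesis using rev_form[OF aT(1,2) _ bT reg c assms(2)] by blast
  qed
qed

lemma gen_sub: "A \<subseteq> gen_semigroup B \<Longrightarrow> gen_semigroup A \<subseteq> gen_semigroup B"
proof
  assume A: "A \<subseteq> gen_semigroup B"
  fix x assume "x \<in> gen_semigroup A"
  then show "x \<in> gen_semigroup B"
  proof (induction rule: gen_semigroup.induct)
    case (base a)
    then show ?case using A by blast
  next
    case (mult a b)
    then show ?case using gen_semigroup.mult by blast
  qed
qed

theorem proposition18:
  fixes n p :: nat
  assumes "n \<ge> 4" and "1 \<le> p" and "p \<le> n - 2"
  shows "gen_semigroup (J n p) \<subseteq> gen_semigroup (J n (p + 1))"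
proof (rule gen_sub, rule subsetI)
  fix a assume "a \<in> J n p"
  then obtain s e k where "valid n s e k p" "a = L n s e k p" using J_form assms(1) by fastforce
  then show "a \<in> gen_semigroup (J n (p + 1))" using decomp assms by auto
qed

end
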